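(* Let $(E,\langle\cdot,\cdot\rangle,\rho,\circ)$ be a pre-Courant algebroid over $M$ and let $\omega\in\Gamma(\operatorname{Hom}(\wedge^2E,E))$. Define $e_1\,\tilde\circ\,e_2=e_1\circ e_2+\omega(e_1,e_2)$. Then $(E,\langle\cdot,\cdot\rangle,\rho,\tilde\circ)$ is a pre-Courant algebroid if and only if $\omega\in C^2_{\mathcal D}(E,\operatorname{Ker}(\rho))$.
   Context: A Courant vector bundle over a smooth manifold $M$ is a vector bundle $E\to M$ with a fibrewise nondegenerate symmetric bilinear form $\langle\cdot,\cdot\rangle$ and a bundle map $\rho:E\to TM$ such that $\rho\circ\rho^*=0$, where $\rho^*:T^*M\to E^*\cong E$ is the dual of $\rho$ followed by the identification $E^*\cong E$ via $\langle\cdot,\cdot\rangle$. A pre-Courant algebroid structure on it is an $\mathbb R$-bilinear operation $\circ$ on $\Gamma(E)$ such that for all $e_1,e_2,e_3\in\Gamma(E)$: (i) $\rho(e_1\circ e_2)=[\rho(e_1),\rho(e_2)]$; (ii) $\langle e_1\circ e_1,e_2\rangle=\frac12\rho(e_2)\langle e_1,e_1\rangle$; (iii) $\rho(e_1)\langle e_2,e_3\rangle=\langle e_1\circ e_2,e_3\rangle+\langle e_2,e_1\circ e_3\rangle$. Define $\mathcal D:C^\infty(M)\to\Gamma(E)$ by $\langle\mathcal Df,e\rangle=\rho(e)f$. $C^2_{\mathcal D}(E,\operatorname{Ker}(\rho))$ is the space of $C^\infty(M)$-bilinear maps $\phi:\Gamma(E)\times\Gamma(E)\to\Gamma(E)$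 such that (1) $\phi$ takes values in $\Gamma(\operatorname{Ker}\rho)$, (2) $\phi(\mathcal Df,e)=0$ for all $f\in C^\infty(M)$, $e\in\Gamma(E)$, (3) $(e_1,e_2,e_3)\mapsto\langle\phi(e_1,e_2),e_3\rangle$ is totally skew-symmetric. *)

theory Defs
  imports Main "HOL.Real_Vector_Spaces"
begin

text \<open>Algebraic (section-level) model of a Courant vector bundle E over M:
  'a plays the role of C^infinity(M) (a commutative real algebra),
  'e plays the role of Gamma(E) (a module over 'a via smul),
  vector fields are derivations of 'a, the Lie bracket is the commutator.\<close>

definition module_str :: "('a::{comm_ring_1,real_algebra_1} \<Rightarrow> 'e::ab_group_add \<Rightarrow> 'e) \<Rightarrow> bool" where
  "module_str smul \<longleftrightarrow>
     (\<forall>f x y. smul f (x + y) = smul f x + smul f y) \<and>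
     (\<forall>f h x. smul (f + h) x = smul f x + smul h x) \<and>
     (\<forall>f h x. smul (f * h) x = smul f (smul h x)) \<and>
     (\<forall>x. smul 1 x = x)"

definition derivation :: "('a::{comm_ring_1,real_algebra_1} \<Rightarrow> 'a) \<Rightarrow> bool" where
  "derivation X \<longleftrightarrow>
     (\<forall>f h. X (f + h) = X f + X h) \<and>
     (\<forall>f h. X (f * h) = f * X h + h * X f) \<and>
     (\<forall>c. X (of_real c) = 0)"

definition lie_bracket :: "('a \<Rightarrow> 'a::ring) \<Rightarrow> ('a \<Rightarrow> 'a) \<Rightarrow> ('a \<Rightarrow> 'a)" where
  "lie_bracket X Y = (\<lambda>f. X (Y f) - Y (X f))"

definition Dop :: "('e \<Rightarrow> 'e \<Rightarrow> 'a) \<Rightarrow> ('e \<Rightarrow> 'a \<Rightarrow> 'a) \<Rightarrow> 'a \<Rightarrow> 'e" where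
  "Dop g rho f = (THE d. \<forall>e. g d e = rho e f)"

definition courant_vb ::
  "('a::{comm_ring_1,real_algebra_1} \<Rightarrow> 'e::ab_group_add \<Rightarrow> 'e) \<Rightarrow> ('e \<Rightarrow> 'e \<Rightarrow> 'a) \<Rightarrow> ('e \<Rightarrow> 'a \<Rightarrow> 'a) \<Rightarrow> bool" where
  "courant_vb smul g rho \<longleftrightarrow>
     module_str smul \<and>
     (\<forall>x y. g x y = g y x) \<and>
     (\<forall>x y z. g (x + y) z = g x z + g y z) \<and>
     (\<forall>f x y. g (smul f x) y = f * g x y) \<and>
     (\<forall>x. (\<forall>y. g x y = 0) \<longrightarrow> x = 0) \<and>
     (\<forall>x y h. rho (x + y) h = rho x h + rho y h) \<and>
     (\<forall>f x h. rho (smul f x) h = f * rho x h) \<and>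
     (\<forall>x. derivation (rho x)) \<and>
     (\<forall>f. \<exists>d. \<forall>e. g d e = rho e f) \<and>
     (\<forall>f h. rho (Dop g rho f) h = 0)"

definition pre_courant ::
  "('a::{comm_ring_1,real_algebra_1} \<Rightarrow> 'e::ab_group_add \<Rightarrow> 'e) \<Rightarrow> ('e \<Rightarrow> 'e \<Rightarrow> 'a) \<Rightarrow> ('e \<Rightarrow> 'a \<Rightarrow> 'a)
    \<Rightarrow> ('e \<Rightarrow> 'e \<Rightarrow> 'e) \<Rightarrow> bool" where
  "pre_courant smul g rho circ \<longleftrightarrow>
     (\<forall>x y z. circ (x + y) z = circ x z + circ y z) \<and>
     (\<forall>x y z. circ x (y + z) = circ x y + circ x z) \<and>
     (\<forall>c x y. circ (smul (of_real c) x) y = smul (of_real c) (circ x y)) \<and>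
     (\<forall>c x y. circ x (smul (of_real c) y) = smul (of_real c) (circ x y)) \<and>
     (\<forall>x y. rho (circ x y) = lie_bracket (rho x) (rho y)) \<and>
     (\<forall>x y. g (circ x x) y = scaleR (1/2) (rho y (g x x))) \<and>
     (\<forall>x y z. rho x (g y z) = g (circ x y) z + g y (circ x z))"

definition hom_wedge2 :: "('a::{comm_ring_1,real_algebra_1} \<Rightarrow> 'e::ab_group_add \<Rightarrow> 'e) \<Rightarrow> ('e \<Rightarrow> 'e \<Rightarrow> 'e) \<Rightarrow> bool" where
  "hom_wedge2 smul \<omega> \<longleftrightarrow>
     (\<forall>x y z. \<omega> (x + y) z = \<omega> x z + \<omega> y z) \<and>
     (\<forall>x y z. \<omega> x (y + z) = \<omega> x y + \<omega> x z) \<and>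
     (\<forall>f x y. \<omega> (smul f x) y = smul f (\<omega> x y)) \<and>
     (\<forall>f x y. \<omega> x (smul f y) = smul f (\<omega> x y)) \<and>
     (\<forall>x y. \<omega> x y = - \<omega> y x)"

definition C2_D ::
  "('a::{comm_ring_1,real_algebra_1} \<Rightarrow> 'e::ab_group_add \<Rightarrow> 'e) \<Rightarrow> ('e \<Rightarrow> 'e \<Rightarrow> 'a) \<Rightarrow> ('e \<Rightarrow> 'a \<Rightarrow> 'a)
    \<Rightarrow> ('e \<Rightarrow> 'e \<Rightarrow> 'e) \<Rightarrow> bool" where
  "C2_D smul g rho \<phi> \<longleftrightarrow>
     (\<forall>x y z. \<phi> (x + y) z = \<phi> x z + \<phi> y z) \<and>
     (\<forall>x y z. \<phi> x (y + z) = \<phi> x y + \<phi> x z) \<and>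
     (\<forall>f x y. \<phi> (smul f x) y = smul f (\<phi> x y)) \<and>
     (\<forall>f x y. \<phi> x (smul f y) = smul f (\<phi> x y)) \<and>
     (\<forall>x y h. rho (\<phi> x y) h = 0) \<and>
     (\<forall>f e. \<phi> (Dop g rho f) e = 0) \<and>
     (\<forall>x y z. g (\<phi> x y) z = - g (\<phi> y x) z) \<and>
     (\<forall>x y z. g (\<phi> x y) z = - g (\<phi> x z) y)"

end

theory Submission
  imports Defs
begin

lemma double_zero_real:
  fixes a :: "'a::real_vector"
  assumes "a + a = 0" shows "a = 0"
proof -
  have "a = scaleR (1/2) a + scaleR (1/2) a"
    by (simp add: scaleR_left_distrib[symmetric])
  also have "\<dots> = scaleR (1/2) (a + a)" by (simp add: scaleR_add_right)
  finally show ?thesis using assms by simp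
qed

theorem lemma4p2:
  fixes smul :: "'a::{comm_ring_1,real_algebra_1} \<Rightarrow> 'e::ab_group_add \<Rightarrow> 'e"
    and g :: "'e \<Rightarrow> 'e \<Rightarrow> 'a" and rho :: "'e \<Rightarrow> 'a \<Rightarrow> 'a"
    and circ :: "'e \<Rightarrow> 'e \<Rightarrow> 'e" and \<omega> :: "'e \<Rightarrow> 'e \<Rightarrow> 'e"
  assumes "courant_vb smul g rho"
    and "pre_courant smul g rho circ"
    and "hom_wedge2 smul \<omega>"
  shows "pre_courant smul g rho (\<lambda>e1 e2. circ e1 e2 + \<omega> e1 e2) \<longleftrightarrow> C2_D smul g rho \<omega>"
proof -
  note cv = assms(1)[unfolded courant_vb_def]
  note pc = assms(2)[unfolded pre_courant_def]
  note hw = assms(3)[unfolded hom_wedge2_def]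
  have gsym: "\<And>x y. g x y = g y x" using cv by blast
  have gadd: "\<And>x y z. g (x + y) z = g x z + g y z" using cv by blast
  have gneg: "\<And>x z. g (- x) z = - g x z"
  proof -
    fix x z
    have "g (x + - x) z = g x z + g (- x) z" by (rule gadd)
    moreover have "g 0 z = 0" using gadd[of 0 0 z] by simp
    ultimately show "g (- x) z = - g x z" by (simp add: eq_neg_iff_add_eq_0 add.commute)
  qed
  have gadd2: "\<And>x y z. g z (x + y) = g z x + g z y" proof - fix x y z show "g z (x + y) = g z x + g z y" using gadd[of x y z] gsym[of z] by simp qed
  have nondeg: "\<And>x. (\<forall>y. g x y = 0) \<Longrightarrow> x = 0" using cv by blast
  have radd: "\<And>x y h. rho (x + y) h = rho x h + rho y h" using cv by blast
  have Dprop: "\<And>f e. g (Dop g rho f) e = rho e f"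
  proof -
    fix f e
    have "\<exists>d. \<forall>e. g d e = rho e f" using cv by blast
    then obtain d where d: "\<forall>e. g d e = rho e f" by blast
    have "\<forall>e. g (Dop g rho f) e = rho e f"
      unfolding Dop_def
    proof (rule theI[of _ d])
      show "\<forall>e. g d e = rho e f" by (rule d)
      fix d' assume "\<forall>e. g d' e = rho e f"
      then have "\<forall>y. g (d' + - d) y = 0" using d by (simp only: gadd gneg) simp
      then have "d' + - d = 0" by (rule nondeg)
      then show "d' = d" by (simp add: add_eq_0_iff eq_neg_iff_add_eq_0)
    qed
    then show "g (Dop g rho f) e = rho e f" by blast
  qed
  have wskew: "\<And>x y. \<omega> x y = - \<omega> y x" using hw by blast
  have wxx: "\<And>x z. g (\<omega> x x) z = 0"
  proof -
    fix x z
    have "g (\<omega> x x) z = - g (\<omega> x x) z" by (subst wskew[of x x]) (rule gneg)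
    then have "g (\<omega> x x) z + g (\<omega> x x) z = 0" by (rule iffD1[OF eq_neg_iff_add_eq_0])
    then show "g (\<omega> x x) z = 0" by (rule double_zero_real)
  qed
  show ?thesis
  proof
    assume A: "pre_courant smul g rho (\<lambda>e1 e2. circ e1 e2 + \<omega> e1 e2)"
    note pa = A[unfolded pre_courant_def]
    have rw: "\<And>x y h. rho (\<omega> x y) h = 0"
    proof -
      fix x y h
      have "rho (circ x y + \<omega> x y) h = rho (circ x y) h"
      proof -
        have "rho (circ x y + \<omega> x y) = lie_bracket (rho x) (rho y)" using pa by blast
        moreover have "rho (circ x y) = lie_bracket (rho x) (rho y)" using pc by blast
        ultimately show ?thesis by simp
      qed
      then show "rho (\<omega> x y) h = 0" using radd by simp
    qed
    have inv: "\<And>x y z. g (\<omega> x y) z = - g (\<omega> x z) y"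
    proof -
      fix x y z
      have "rho x (g y z) = g (circ x y + \<omega> x y) z + g y (circ x z + \<omega> x z)"
        using pa by blast
      moreover have "rho x (g y z) = g (circ x y) z + g y (circ x z)" using pc by blast
      ultimately have "g (\<omega> x y) z + g y (\<omega> x z) = 0"
        using gadd gadd2 by (simp add: algebra_simps)
      then show "g (\<omega> x y) z = - g (\<omega> x z) y" using gsym[of y "\<omega> x z"]
        by (simp add: eq_neg_iff_add_eq_0)
    qed
    have sk: "\<And>x y z. g (\<omega> x y) z = - g (\<omega> y x) z" by (subst wskew) (rule gneg)
    have wD: "\<And>f e. \<omega> (Dop g rho f) e = 0"
    proof -
      fix f e
      have "\<forall>z. g (\<omega> (Dop g rho f) e) z = 0"
      proof
        fix z
        have "g (\<omega> (Dop g rho f) e) z = - g (\<omega> e (Dop g rho f)) z" by (rule sk)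
        also have "\<dots> = g (\<omega> e z) (Dop g rho f)" using inv[of e "Dop g rho f" z] by simp
        also have "\<dots> = rho (\<omega> e z) f" by (simp only: gsym[of "\<omega> e z"] Dprop)
        also have "\<dots> = 0" by (rule rw)
        finally show "g (\<omega> (Dop g rho f) e) z = 0" .
      qed
      then show "\<omega> (Dop g rho f) e = 0" by (rule nondeg)
    qed
    show "C2_D smul g rho \<omega>"
      unfolding C2_D_def
      apply (intro conjI)
      using hw apply blast
      using hw apply blast
      using hw apply blast
      using hw apply blast
      using rw apply blast
      using wD apply blast
      using sk apply blast
      using inv apply blast
      done
  next
    assume B: "C2_D smul g rho \<omega>"
    note cb = B[unfolded C2_D_def]
    have rw: "\<And>x y. rho (\<omega> x y) = (\<lambda>h. 0)" using cb by (intro ext) blast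
    have inv: "\<And>x y z. g (\<omega> x y) z = - g (\<omega> x z) y" using cb by blast
    have wadd1: "\<And>x y z. \<omega> (x + y) z = \<omega> x z + \<omega> y z" using hw by blast
    have wadd2: "\<And>x y z. \<omega> x (y + z) = \<omega> x y + \<omega> x z" using hw by blast
    have ws1: "\<And>f x y. \<omega> (smul f x) y = smul f (\<omega> x y)" using hw by blast
    have ws2: "\<And>f x y. \<omega> x (smul f y) = smul f (\<omega> x y)" using hw by blast
    have cadd1: "\<And>x y z. circ (x + y) z = circ x z + circ y z" using pc by blast
    have cadd2: "\<And>x y z. circ x (y + z) = circ x y + circ x z" using pc by blast
    have cs1: "\<And>c x y. circ (smul (of_real c) x) y = smul (of_real c) (circ x y)" using pc by blast
    have cs2: "\<And>c x y. circ x (smul (of_real c) y) = smul (of_real c) (circ x y)" using pc by blast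
    have crho: "\<And>x y. rho (circ x y) = lie_bracket (rho x) (rho y)" using pc by blast
    have c2: "\<And>x y. g (circ x x) y = scaleR (1/2) (rho y (g x x))" using pc by blast
    have c3: "\<And>x y z. rho x (g y z) = g (circ x y) z + g y (circ x z)" using pc by blast
    have m: "module_str smul" using cv by blast
    have sa: "\<And>f a b. smul f (a + b) = smul f a + smul f b" using m unfolding module_str_def by blast
    show "pre_courant smul g rho (\<lambda>e1 e2. circ e1 e2 + \<omega> e1 e2)"
      unfolding pre_courant_def
    proof (intro conjI allI)
      fix x y z
      show "circ (x + y) z + \<omega> (x + y) z = circ x z + \<omega> x z + (circ y z + \<omega> y z)"
        by (simp only: cadd1 wadd1 ac_simps)
      show "circ x (y + z) + \<omega> x (y + z) = circ x y + \<omega> x y + (circ x z + \<omega> x z)"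
        by (simp only: cadd2 wadd2 ac_simps)
      have "g (\<omega> x y) z + g y (\<omega> x z) = 0"
        using inv[of x y z] gsym[of y "\<omega> x z"] by simp
      then show "rho x (g y z) = g (circ x y + \<omega> x y) z + g y (circ x z + \<omega> x z)"
        by (simp only: c3 gadd gadd2) (simp add: algebra_simps)
    next
      fix c x y
      show "circ (smul (of_real c) x) y + \<omega> (smul (of_real c) x) y = smul (of_real c) (circ x y + \<omega> x y)"
        by (simp only: cs1 ws1 sa)
      show "circ x (smul (of_real c) y) + \<omega> x (smul (of_real c) y) = smul (of_real c) (circ x y + \<omega> x y)"
        by (simp only: cs2 ws2 sa)
    next
      fix x y
      show "rho (circ x y + \<omega> x y) = lie_bracket (rho x) (rho y)"
        using crho radd rw by auto
      show "g (circ x x + \<omega> x x) y = scaleR (1/2) (rho y (g x x))"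
        using c2 gadd wxx by simp
    qed
  qed
qed

end
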